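(* Let $X\in\mathbb{R}^{n\times p}$, $y\in\mathbb{R}^n$, $\lambda>0$, $\alpha>0$, $G=X^\top X+\alpha I_p$, $\tilde y=X^\top y$. Define $F:\mathbb{R}^{2p}\to\mathbb{R}^{2p}$ for $z=(\beta,d)\in\mathbb{R}^p\times\mathbb{R}^p$ by $$F(z)=\begin{pmatrix}\beta-T_\lambda(\beta+d)\\ G\beta+nd-\tilde y\end{pmatrix}.$$ For $w=(\beta,d)$ let $A(w)=\{i:|\beta_i+d_i|\ge\lambda\}$, let $D_w=\operatorname{diag}(\mathbf 1_{\{i\in A(w)\}})_{i=1}^p$, and define the $2p\times2p$ matrix (in $(\beta,d)$-block coordinates) $$H(w)=\begin{pmatrix} I_p-D_w & -D_w\\ G & nI_p\end{pmatrix}.$$ Then $F$ is Newton differentiable at every $z\in\mathbb{R}^{2p}$ with $H(w)$ as a Newton derivative, i.e. $\|F(z+h)-F(z)-H(z+h)h\|_2=o(\|h\|_2)$ as $h\to0$. Furthermore, for every $w$, $H(w)$ is invertible and $$\|H(w)^{-1}\|\le 1+\frac{2\,(n+1+\alpha+\|X\|^2)^2}{\alpha},$$ where $\|\cdot\|$ is the spectral (operator $2$-) norm.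
   Context: $T_\lambda$ is the componentwise soft-threshold operator $T_\lambda(x)_i=\operatorname{sgn}(x_i)\max(|x_i|-\lambda,0)$. Newton differentiability of $F:\mathbb{R}^m\to\mathbb{R}^l$ at $x$: there exist an open neighborhood $N(x)$ and a family $D:N(x)\to\mathbb{R}^{l\times m}$ with $\|F(x+h)-F(x)-D(x+h)h\|_2=o(\|h\|_2)$. (In the coordinate ordering $(d_A,\beta_B,\beta_A,d_B)$ with $A=A(w)$, $B$ its complement, $H(w)$ is the block matrix with rows $[-I_{AA},0,0,0]$, $[0,I_{BB},0,0]$, $[nI_{AA},X_A^\top X_B,G_{AA},0]$, $[0,G_{BB},X_B^\top X_A,nI_{BB}]$.) *)

theory Defs
  imports "HOL-Analysis.Analysis"
begin

text \<open>Vectors in R^{2p} are indexed by the sum type 'p + 'p: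
  index Inl i is the beta-coordinate i, index Inr i is the d-coordinate i.
  The Euclidean norm on real^('p+'p) is the 2-norm of (beta,d).\<close>

definition beta_part :: "real^('p::finite + 'p) \<Rightarrow> real^'p" where
  "beta_part z = (\<chi> i. z $ Inl i)"

definition d_part :: "real^('p::finite + 'p) \<Rightarrow> real^'p" where
  "d_part z = (\<chi> i. z $ Inr i)"

definition soft_thresh :: "real \<Rightarrow> real^'p::finite \<Rightarrow> real^'p" where
  "soft_thresh lam x = (\<chi> i. sgn (x $ i) * max (\<bar>x $ i\<bar> - lam) 0)"

definition Gmat :: "real^'p^'n \<Rightarrow> real \<Rightarrow> real^'p^'p" where
  "Gmat X alpha = transpose X ** X + alpha *\<^sub>R mat 1"

definition Fmap :: "real^'p::finite^'n::finite \<Rightarrow> real^'n \<Rightarrow> real \<Rightarrow> real \<Rightarrow>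
    real^('p + 'p) \<Rightarrow> real^('p + 'p)" where
  "Fmap X y lam alpha z =
     (let b = beta_part z; d = d_part z;
          t = soft_thresh lam (b + d);
          r = Gmat X alpha *v b + real CARD('n) *\<^sub>R d - transpose X *v y
      in (\<chi> k. case k of Inl i \<Rightarrow> b $ i - t $ i | Inr i \<Rightarrow> r $ i))"

definition active_set :: "real \<Rightarrow> real^('p::finite + 'p) \<Rightarrow> 'p set" where
  "active_set lam w = {i. \<bar>beta_part w $ i + d_part w $ i\<bar> \<ge> lam}"

definition Hmat :: "real^'p::finite^'n::finite \<Rightarrow> real \<Rightarrow> real \<Rightarrow>
    real^('p + 'p) \<Rightarrow> real^('p + 'p)^('p + 'p)" where
  "Hmat X lam alpha w =
     (\<chi> r c. case (r, c) of
        (Inl i, Inl j) \<Rightarrow> (if i = j \<and> i \<notin> active_set lam w then 1 else 0)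
      | (Inl i, Inr j) \<Rightarrow> (if i = j \<and> i \<in> active_set lam w then -1 else 0)
      | (Inr i, Inl j) \<Rightarrow> Gmat X alpha $ i $ j
      | (Inr i, Inr j) \<Rightarrow> (if i = j then real CARD('n) else 0))"

end

theory Submission imports Defs begin

lemma sum_plus_univ: "(\<Sum>k\<in>(UNIV::('a::finite + 'a) set). f k) = (\<Sum>i\<in>UNIV. f (Inl i)) + (\<Sum>i\<in>UNIV. f (Inr i))"
  using sum.Plus[of "UNIV::'a set" "UNIV::'a set" f] by (simp add: comp_def)

lemma sum_delta_mult: "(\<Sum>j\<in>UNIV. (if i = j then c else 0) * f j) = c * (f (i::'a::finite) :: real)"
  by (simp add: if_distrib[of "\<lambda>t. t * _"] cong: if_cong)

lemma norm_split: "(norm (x::real^('p::finite+'p)))\<^sup>2 = (norm (beta_part x))\<^sup>2 + (norm (d_part x))\<^sup>2"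
  by (simp add: power2_norm_eq_inner inner_vec_def sum_plus_univ beta_part_def d_part_def)

lemma Hmat_Inl: "(Hmat X lam alpha w *v x) $ Inl i = (if i \<in> active_set lam w then - (d_part x $ i) else beta_part x $ i)"
  by (auto simp: Hmat_def matrix_vector_mult_def sum_plus_univ beta_part_def d_part_def sum_delta_mult)

lemma Hmat_Inr: "(Hmat X lam alpha w *v x) $ Inr i = (Gmat X alpha *v beta_part x) $ i + real CARD('n) * d_part x $ i"
  for X :: "real^'p::finite^'n::finite"
  by (auto simp: Hmat_def matrix_vector_mult_def sum_plus_univ beta_part_def d_part_def sum_delta_mult)


definition del :: "real \<Rightarrow> real \<Rightarrow> real" where
  "del lam u = (if \<bar>u\<bar> = lam then lam else \<bar>\<bar>u\<bar> - lam\<bar>)"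

lemma del_pos: "lam > 0 \<Longrightarrow> del lam u > 0"
  by (auto simp: del_def)

lemma st_local:
  assumes "lam > 0" "\<bar>k\<bar> < del lam u"
  shows "sgn (u+k) * max (\<bar>u+k\<bar> - lam) 0 - sgn u * max (\<bar>u\<bar> - lam) 0 - (if lam \<le> \<bar>u+k\<bar> then k else 0) = 0"
  using assms unfolding del_def sgn_real_def
  by (auto split: if_splits simp: abs_if max_def)

lemma beta_part_add: "beta_part (a + b) = beta_part a + beta_part b"
  by (simp add: beta_part_def vec_eq_iff)
lemma d_part_add: "d_part (a + b) = d_part a + d_part b"
  by (simp add: d_part_def vec_eq_iff)

lemma err_zero:
  fixes X :: "real^'p::finite^'n::finite"
  assumes "lam > 0" "\<forall>i. \<bar>h $ Inl i + h $ Inr i\<bar> < del lam (z $ Inl i + z $ Inr i)"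
  shows "Fmap X y lam alpha (z + h) - Fmap X y lam alpha z - Hmat X lam alpha (z + h) *v h = 0"
proof (subst vec_eq_iff, intro allI)
  fix k :: "'p + 'p"
  show "(Fmap X y lam alpha (z + h) - Fmap X y lam alpha z - Hmat X lam alpha (z + h) *v h) $ k = 0 $ k"
  proof (cases k)
    case (Inl i)
    have "(Fmap X y lam alpha (z + h) - Fmap X y lam alpha z - Hmat X lam alpha (z + h) *v h) $ k
      = - (sgn ((z $ Inl i + z $ Inr i) + (h $ Inl i + h $ Inr i)) * max (\<bar>(z $ Inl i + z $ Inr i) + (h $ Inl i + h $ Inr i)\<bar> - lam) 0
          - sgn (z $ Inl i + z $ Inr i) * max (\<bar>z $ Inl i + z $ Inr i\<bar> - lam) 0
          - (if lam \<le> \<bar>(z $ Inl i + z $ Inr i) + (h $ Inl i + h $ Inr i)\<bar> then (h $ Inl i + h $ Inr i) else 0))"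
      unfolding Inl by (simp add: Hmat_Inl Fmap_def Let_def soft_thresh_def beta_part_def d_part_def active_set_def algebra_simps)
    also have "\<dots> = 0" using st_local[OF assms(1) assms(2)[rule_format, of i]] by simp
    finally show ?thesis by simp
  next
    case (Inr i)
    show ?thesis unfolding Inr
      by (simp add: Hmat_Inr Fmap_def Let_def beta_part_add d_part_add matrix_vector_right_distrib algebra_simps)
  qed
qed

lemma part1:
  fixes X :: "real^'p::finite^'n::finite"
  assumes "lam > 0"
  shows "((\<lambda>h. norm (Fmap X y lam alpha (z + h) - Fmap X y lam alpha z
                          - Hmat X lam alpha (z + h) *v h) / norm h) \<longlongrightarrow> 0) (at 0)"
proof (rule tendsto_eventually)
  have "\<forall>\<^sub>F h in at 0. \<forall>i. \<bar>h $ Inl i + h $ Inr i\<bar> < del lam (z $ Inl i + z $ Inr i)"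
  proof (rule eventually_all_finite)
    fix i
    let ?d = "del lam (z $ Inl i + z $ Inr i)"
    have dp: "?d > 0" using del_pos[OF assms] .
    show "\<forall>\<^sub>F h in at 0. \<bar>h $ Inl i + h $ Inr i\<bar> < ?d"
      unfolding eventually_at
    proof (intro exI[of _ "?d/2"] conjI ballI impI)
      show "?d/2 > 0" using dp by simp
      fix h :: "real^('p+'p)" assume "h \<noteq> 0 \<and> dist h 0 < ?d/2"
      then have "norm h < ?d/2" by simp
      moreover have "\<bar>h $ Inl i\<bar> \<le> norm h" "\<bar>h $ Inr i\<bar> \<le> norm h"
        by (simp_all add: component_le_norm_cart)
      ultimately show "\<bar>h $ Inl i + h $ Inr i\<bar> < ?d" by linarith
    qed
  qed
  then show "\<forall>\<^sub>F h in at 0. norm (Fmap X y lam alpha (z + h) - Fmap X y lam alpha z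
                          - Hmat X lam alpha (z + h) *v h) / norm h = 0"
    by eventually_elim (simp add: err_zero[OF assms])
qed


lemma tr_inner: "inner u (transpose X *v w) = inner (X *v u) (w::real^'n::finite)"
  for X :: "real^'p::finite^'n::finite"
  by (metis transpose_matrix_vector dot_lmul_matrix inner_commute)

lemma G_inner: "inner u (Gmat X alpha *v v) = inner (X *v u) (X *v v) + alpha * inner u v"
  for X :: "real^'p::finite^'n::finite"
proof -
  have "Gmat X alpha *v v = transpose X *v (X *v v) + alpha *\<^sub>R v"
    by (simp add: Gmat_def matrix_vector_mult_add_rdistrib matrix_vector_mul_assoc[symmetric] scaleR_matrix_vector_assoc[symmetric])
  then show ?thesis
    by (simp only: inner_add_right tr_inner inner_scaleR_right)
qed

lemma XX_bound: "inner (X *v u) (X *v v) \<le> (onorm (\<lambda>v. X *v v))\<^sup>2 * (norm u * norm v)"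
  for X :: "real^'p::finite^'n::finite"
proof -
  let ?N = "onorm (\<lambda>v. X *v v)"
  have N0: "0 \<le> ?N" by (rule onorm_pos_le) simp
  have "inner (X *v u) (X *v v) \<le> norm (X *v u) * norm (X *v v)" by (rule norm_cauchy_schwarz)
  also have "\<dots> \<le> (?N * norm u) * (?N * norm v)"
    by (intro mult_mono onorm) (auto intro: mult_nonneg_nonneg N0)
  finally show ?thesis by (simp add: power2_eq_square algebra_simps)
qed

lemma restrict_norm: "norm (\<chi> i. if P i then (f::real^'p::finite) $ i else 0) \<le> norm f"
  unfolding norm_le inner_vec_def by (rule sum_mono) auto

lemma quad_div: "0 \<le> t \<Longrightarrow> 0 \<le> M \<Longrightarrow> (a::real) > 0 \<Longrightarrow> a * t\<^sup>2 \<le> t * M \<Longrightarrow> t \<le> M / a"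
  by (cases "t = 0") (auto simp: power2_eq_square field_simps)

lemma norm_le_sum: "norm (x::real^('p::finite+'p)) \<le> norm (beta_part x) + norm (d_part x)"
proof -
  have "(norm x)\<^sup>2 \<le> (norm (beta_part x) + norm (d_part x))\<^sup>2"
    unfolding norm_split by (simp add: power2_sum)
  then show ?thesis by (rule power2_le_imp_le) simp
qed


lemma div_le_self1: "0 \<le> M \<Longrightarrow> 1 \<le> n \<Longrightarrow> M / n \<le> (M::real)"
  using divide_left_mono[of 1 n M] by simp

lemma mv_neg: "(A::real^'a::finite^'b::finite) *v (- x) = - (A *v x)"
  by (metis diff_0 matrix_vector_mult_diff_distrib matrix_vector_mult_0_right)

lemma key_bound:
  fixes X :: "real^'p::finite^'n::finite"
  assumes ap: "alpha > 0"
  defines "N \<equiv> onorm (\<lambda>v. X *v v)"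
  defines "c \<equiv> real CARD('n) + 1 + alpha + N\<^sup>2"
  shows "norm x \<le> (1 + 2 * c\<^sup>2 / alpha) * norm (Hmat X lam alpha w *v x)"
proof -
  define A where "A = active_set lam w"
  define n where "n = real CARD('n)"
  define a where "a = beta_part x"
  define b where "b = d_part x"
  define v where "v = Hmat X lam alpha w *v x"
  define r where "r = beta_part v"
  define s where "s = d_part v"
  define \<rho> where "\<rho> = norm v"
  define aA where "aA = (\<chi> i. if i \<in> A then a $ i else 0)"
  define aB where "aB = (\<chi> i. if i \<notin> A then r $ i else 0)"
  have N0: "0 \<le> N" unfolding N_def by (rule onorm_pos_le) simp
  have n1: "n \<ge> 1" unfolding n_def by simp
  have r_eq: "r $ i = (if i \<in> A then - b $ i else a $ i)" for i
    unfolding r_def v_def beta_part_def by (simp add: Hmat_Inl A_def a_def b_def beta_part_def d_part_def)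
  have s_eq: "s = Gmat X alpha *v a + n *\<^sub>R b"
    unfolding s_def v_def d_part_def by (simp add: vec_eq_iff Hmat_Inr a_def b_def n_def d_part_def)
  have nsp: "(norm v)\<^sup>2 = (norm r)\<^sup>2 + (norm s)\<^sup>2"
    using norm_split[of v] unfolding r_def s_def .
  have rr: "norm r \<le> \<rho>" unfolding \<rho>_def
    by (rule power2_le_imp_le) (use nsp in simp_all)
  have ss: "norm s \<le> \<rho>" unfolding \<rho>_def
    by (rule power2_le_imp_le) (use nsp in simp_all)
  have a_split: "a = aA + aB"
    by (simp add: vec_eq_iff aA_def aB_def r_eq)
  have aB_le: "norm aB \<le> \<rho>" using restrict_norm[of "\<lambda>i. i \<notin> A" r] rr unfolding aB_def by linarith
  have aAb: "inner aA b = - inner aA r"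
    unfolding inner_vec_def aA_def sum_negf[symmetric] by (auto intro!: sum.cong simp: r_eq)
  have aAaB: "inner aA aB = 0"
    unfolding inner_vec_def aA_def aB_def by (simp add: sum.neutral)
  have "inner aA s = inner (X *v aA) (X *v aA) + alpha * inner aA aA + inner (X *v aA) (X *v aB) - n * inner aA r"
    unfolding s_eq a_split
    by (simp add: inner_add_right matrix_vector_right_distrib G_inner aAb aAaB algebra_simps)
  then have "alpha * (norm aA)\<^sup>2 \<le> inner aA s - inner (X *v aA) (X *v aB) + n * inner aA r"
    by (simp add: power2_norm_eq_inner)
  also have "\<dots> \<le> norm aA * \<rho> + N\<^sup>2 * (norm aA * \<rho>) + n * (norm aA * \<rho>)"
  proof -
    have "inner aA s \<le> norm aA * \<rho>"
      using norm_cauchy_schwarz[of aA s] mult_left_mono[OF ss norm_ge_zero[of aA]] by linarith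
    moreover have "- inner (X *v aA) (X *v aB) \<le> N\<^sup>2 * (norm aA * \<rho>)"
    proof -
      have "- inner (X *v aA) (X *v aB) = inner (X *v aA) (X *v (- aB))"
        by (simp add: mv_neg)
      also have "\<dots> \<le> N\<^sup>2 * (norm aA * norm (-aB))" unfolding N_def by (rule XX_bound)
      also have "\<dots> \<le> N\<^sup>2 * (norm aA * \<rho>)" using aB_le by (simp add: mult_left_mono)
      finally show ?thesis .
    qed
    moreover have "n * inner aA r \<le> n * (norm aA * \<rho>)"
      using norm_cauchy_schwarz[of aA r] mult_left_mono[OF rr norm_ge_zero[of aA]] n1
      by (intro mult_left_mono) auto
    ultimately show ?thesis by linarith
  qed
  also have "\<dots> = norm aA * ((1 + N\<^sup>2 + n) * \<rho>)" by (simp add: algebra_simps)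
  finally have aA_le: "norm aA \<le> (1 + N\<^sup>2 + n) * \<rho> / alpha"
    using n1 by (intro quad_div) (auto simp: \<rho>_def ap intro!: mult_nonneg_nonneg add_nonneg_nonneg)
  have a_le: "norm a \<le> (1 + N\<^sup>2 + n) * \<rho> / alpha + \<rho>"
    using norm_triangle_ineq[of aA aB] aA_le aB_le a_split by simp
  have "inner b s = inner (X *v b) (X *v a) + alpha * inner b a + n * inner b b"
    unfolding s_eq by (simp add: inner_add_right G_inner)
  then have "n * (norm b)\<^sup>2 \<le> inner b s - inner (X *v b) (X *v a) - alpha * inner b a"
    by (simp add: power2_norm_eq_inner)
  also have "\<dots> \<le> norm b * \<rho> + N\<^sup>2 * (norm b * norm a) + alpha * (norm b * norm a)"
  proof -
    have "inner b s \<le> norm b * \<rho>"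
      using norm_cauchy_schwarz[of b s] mult_left_mono[OF ss norm_ge_zero[of b]] by linarith
    moreover have "- inner (X *v b) (X *v a) \<le> N\<^sup>2 * (norm b * norm a)"
    proof -
      have "- inner (X *v b) (X *v a) = inner (X *v b) (X *v (- a))"
        by (simp add: mv_neg)
      also have "\<dots> \<le> N\<^sup>2 * (norm b * norm (-a))" unfolding N_def by (rule XX_bound)
      finally show ?thesis by simp
    qed
    moreover have "- (alpha * inner b a) \<le> alpha * (norm b * norm a)"
    proof -
      have "- inner b a \<le> norm b * norm a" using norm_cauchy_schwarz[of b "-a"] by simp
      then have "alpha * (- inner b a) \<le> alpha * (norm b * norm a)" using ap by (intro mult_left_mono) auto
      then show ?thesis by simp
    qed
    ultimately show ?thesis by linarith
  qed
  also have "\<dots> = norm b * (\<rho> + (N\<^sup>2 + alpha) * norm a)" by (simp add: algebra_simps)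
  finally have "norm b \<le> (\<rho> + (N\<^sup>2 + alpha) * norm a) / n"
    using n1 N0 less_imp_le[OF ap] by (intro quad_div) (auto simp: \<rho>_def intro!: add_nonneg_nonneg mult_nonneg_nonneg)
  also have "\<dots> \<le> \<rho> + (N\<^sup>2 + alpha) * norm a"
    using n1 less_imp_le[OF ap] by (intro div_le_self1) (auto intro!: add_nonneg_nonneg mult_nonneg_nonneg simp: \<rho>_def ap)
  finally have b_le: "norm b \<le> \<rho> + (N\<^sup>2 + alpha) * norm a" .
  have "norm x \<le> norm a + norm b" unfolding a_def b_def by (rule norm_le_sum)
  also have "\<dots> \<le> (1 + N\<^sup>2 + alpha) * norm a + \<rho>" using b_le by (simp add: algebra_simps)
  also have "\<dots> \<le> c * (c * \<rho> / alpha + \<rho>) + \<rho>"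
  proof -
    have "(1 + N\<^sup>2 + n) * \<rho> / alpha \<le> c * \<rho> / alpha"
      using ap by (intro divide_right_mono mult_right_mono) (auto simp: c_def n_def \<rho>_def)
    then have "norm a \<le> c * \<rho> / alpha + \<rho>" using a_le by linarith
    moreover have "1 + N\<^sup>2 + alpha \<le> c" using n1 by (simp add: c_def n_def)
    moreover have "0 \<le> 1 + N\<^sup>2 + alpha" using ap by simp
    ultimately show ?thesis
      by (intro add_right_mono mult_mono) (auto simp: \<rho>_def)
  qed
  also have "\<dots> \<le> (1 + 2 * c\<^sup>2 / alpha) * \<rho>"
  proof -
    have cge: "c \<ge> alpha" using n1 by (simp add: c_def n_def)
    have "c * (c * \<rho> / alpha + \<rho>) + \<rho> = (c\<^sup>2 / alpha + c + 1) * \<rho>"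
      by (simp add: power2_eq_square algebra_simps)
    also have "\<dots> \<le> (1 + 2 * c\<^sup>2 / alpha) * \<rho>"
    proof (rule mult_right_mono)
      have "c \<le> c\<^sup>2 / alpha" using cge ap by (simp add: power2_eq_square field_simps mult_right_mono)
      then show "c\<^sup>2 / alpha + c + 1 \<le> 1 + 2 * c\<^sup>2 / alpha" by simp
    qed (simp add: \<rho>_def)
    finally show ?thesis .
  qed
  finally show ?thesis unfolding \<rho>_def v_def .
qed


lemma matrix_inv_right: "invertible (A::real^'n::finite^'n) \<Longrightarrow> A ** matrix_inv A = mat 1"
  unfolding invertible_def matrix_inv_def by (rule someI_ex[where P="\<lambda>A'. A ** A' = mat 1 \<and> A' ** A = mat 1", THEN conjunct1])

lemma part2:
  fixes X :: "real^'p::finite^'n::finite"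
  assumes ap: "alpha > 0"
  shows "invertible (Hmat X lam alpha w)
              \<and> onorm (\<lambda>v. matrix_inv (Hmat X lam alpha w) *v v)
                  \<le> 1 + 2 * (real CARD('n) + 1 + alpha + (onorm (\<lambda>v. X *v v))\<^sup>2)\<^sup>2 / alpha"
proof -
  let ?H = "Hmat X lam alpha w"
  let ?K = "1 + 2 * (real CARD('n) + 1 + alpha + (onorm (\<lambda>v. X *v v))\<^sup>2)\<^sup>2 / alpha"
  have kb: "norm x \<le> ?K * norm (?H *v x)" for x using key_bound[OF ap] .
  have "\<forall>x. ?H *v x = 0 \<longrightarrow> x = 0" using kb by (metis norm_le_zero_iff mult_zero_right norm_zero)
  then have inv: "invertible ?H" using matrix_left_invertible_ker invertible_left_inverse by blast
  have "onorm (\<lambda>v. matrix_inv ?H *v v) \<le> ?K"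
  proof (rule onorm_le)
    fix v
    have "?H *v (matrix_inv ?H *v v) = v"
      by (simp add: matrix_vector_mul_assoc matrix_inv_right[OF inv])
    then show "norm (matrix_inv ?H *v v) \<le> ?K * norm v" using kb[of "matrix_inv ?H *v v"] by simp
  qed
  with inv show ?thesis by simp
qed

theorem theorem1:
  fixes X :: "real^'p::finite^'n::finite" and y :: "real^'n"
    and lam alpha :: real
  assumes "lam > 0" and "alpha > 0"
  shows "(\<forall>z. ((\<lambda>h. norm (Fmap X y lam alpha (z + h) - Fmap X y lam alpha z
                          - Hmat X lam alpha (z + h) *v h) / norm h) \<longlongrightarrow> 0) (at 0))
       \<and> (\<forall>w. invertible (Hmat X lam alpha w)
              \<and> onorm (\<lambda>v. matrix_inv (Hmat X lam alpha w) *v v)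
                  \<le> 1 + 2 * (real CARD('n) + 1 + alpha + (onorm (\<lambda>v. X *v v))\<^sup>2)\<^sup>2 / alpha)"
  using part1[OF assms(1)] part2[OF assms(2)] by blast

end
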